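(* Suppose $\Lambda((0,1])>0$. Then there exists a constant $C_1>0$, depending on $\Lambda$ but not on $n$ or $k$, such that for all integers $2\le k\le n$, $$E\Big[\int_0^{\tau_{k,n}}\frac{1}{N_n(s)}\,ds\Big]\le\frac{C_1}{k}.$$
   Context: Let $\Lambda$ be a finite measure on $[0,1]$. For $n\ge 1$, the $\Lambda$-coalescent started with $n$ blocks, $(\Pi_n(t))_{t\ge0}$, is the continuous-time Markov chain on partitions of $\{1,\dots,n\}$, started from the partition into singletons, in which, whenever there are $b$ blocks, each particular collection of $k\ge2$ blocks merges into a single block at rate $\lambda_{b,k}=\int_{[0,1]}p^{k-2}(1-p)^{b-k}\,\Lambda(dp)$, and no other transitions occur. $N_n(t)$ is the number of blocks of $\Pi_n(t)$, and $\tau_{k,n}=\inf\{t\ge0:N_n(t)<k\}$. *)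

theory Defs
  imports "HOL-Probability.Probability"
begin

text \<open>A partition of a finite set of labels is represented as a set of (nonempty) blocks.\<close>
type_synonym partition = "nat set set"

definition finite_measure_on_unit :: "real measure \<Rightarrow> bool" where
  "finite_measure_on_unit L \<longleftrightarrow> finite_measure L \<and> space L = {0..1}
     \<and> sets L = sets (restrict_space borel {0..1::real})"

text \<open>The rate lambda(b,k) at which a particular collection of k of b blocks merges.\<close>
definition coal_rate :: "real measure \<Rightarrow> nat \<Rightarrow> nat \<Rightarrow> real" where
  "coal_rate L b k = (\<integral>p. p ^ (k - 2) * (1 - p) ^ (b - k) \<partial>L)"

definition merge_sets :: "partition \<Rightarrow> partition set" where
  "merge_sets P = {S. S \<subseteq> P \<and> 2 \<le> card S}"

definition total_rate :: "real measure \<Rightarrow> partition \<Rightarrow> real" where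
  "total_rate L P = (\<Sum>S\<in>merge_sets P. coal_rate L (card P) (card S))"

definition coal_step :: "real measure \<Rightarrow> partition \<Rightarrow> partition pmf" where
  "coal_step L P = (if card P \<le> 1 then return_pmf P
     else map_pmf (\<lambda>S. insert (\<Union>S) (P - S))
       (embed_pmf (\<lambda>S. if S \<in> merge_sets P
                        then coal_rate L (card P) (card S) / total_rate L P else 0)))"

text \<open>The first m+1 states of the jump chain started in P.\<close>
fun jump_chain :: "real measure \<Rightarrow> nat \<Rightarrow> partition \<Rightarrow> partition list pmf" where
  "jump_chain L 0 P = return_pmf [P]"
| "jump_chain L (Suc m) P =
     bind_pmf (coal_step L P) (\<lambda>Q. map_pmf (\<lambda>xs. P # xs) (jump_chain L m Q))"

definition singletons :: "nat \<Rightarrow> partition" where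
  "singletons n = (\<lambda>i. {i}) ` {1..n}"

text \<open>Probability space of the Lambda-coalescent started with n blocks: the jump chain
  (n steps suffice, the chain being absorbed after at most n-1 jumps) together with
  i.i.d. standard exponential variables used for the holding times.\<close>
definition coal_space :: "real measure \<Rightarrow> nat \<Rightarrow> (partition list \<times> (nat \<Rightarrow> real)) measure" where
  "coal_space L n = measure_pmf (jump_chain L n (singletons n))
     \<Otimes>\<^sub>M PiM UNIV (\<lambda>_::nat. density lborel (exponential_density 1))"

text \<open>Holding time in the i-th state: exponential with parameter the total jump rate.\<close>
definition hold :: "real measure \<Rightarrow> partition list \<times> (nat \<Rightarrow> real) \<Rightarrow> nat \<Rightarrow> real" where
  "hold L \<omega> i = snd \<omega> i / total_rate L (fst \<omega> ! i)"

text \<open>The partition Pi_n(t): the state after all jumps that happened by time t.\<close>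
definition coal_state :: "real measure \<Rightarrow> partition list \<times> (nat \<Rightarrow> real) \<Rightarrow> real \<Rightarrow> partition" where
  "coal_state L \<omega> t = fst \<omega> ! card {j \<in> {1..<length (fst \<omega>)}.
        2 \<le> card (fst \<omega> ! (j - 1)) \<and> (\<Sum>i<j. hold L \<omega> i) \<le> t}"

definition num_blocks :: "real measure \<Rightarrow> partition list \<times> (nat \<Rightarrow> real) \<Rightarrow> real \<Rightarrow> nat" where
  "num_blocks L \<omega> t = card (coal_state L \<omega> t)"

definition tau :: "real measure \<Rightarrow> nat \<Rightarrow> partition list \<times> (nat \<Rightarrow> real) \<Rightarrow> real" where
  "tau L k \<omega> = Inf {t. 0 \<le> t \<and> num_blocks L \<omega> t < k}"

end

theory Submission
  imports Defs
begin


lemma G_bound: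
  fixes p :: real assumes "0 \<le> p" "p \<le> 1" "2 \<le> b"
  shows "real b * p - 1 + (1-p)^b \<ge> real b * p^2 / 2"
  using assms(3)
proof (induction b rule: dec_induct)
  case base
  then show ?case by (simp add: power2_eq_square algebra_simps)
next
  case (step b)
  have "(1-p)^b \<le> (1-p)^1" using assms step(1)
    by (intro power_decreasing) auto
  then have "p * (1 - (1-p)^b) \<ge> p * p" using assms by (intro mult_left_mono) auto
  then have h1: "p*p \<le> p - p*(1-p)^b" by (simp add: algebra_simps)
  have e: "(1-p)^Suc b = (1-p)^b - p*(1-p)^b" by (simp add: algebra_simps)
  have e2: "real (Suc b) * p^2/2 = real b*p^2/2 + p*p/2" by (simp add: algebra_simps power2_eq_square)
  have e3: "real (Suc b) * p = real b*p + p" by (simp add: algebra_simps)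
  have "0 \<le> p*p" by simp
  then show ?case using step(3) h1 e e2 e3 by linarith
qed

lemma binom_mean:
  fixes p q :: real
  shows "(\<Sum>j\<le>b. real (b choose j) * real j * p^j * q^(b-j)) = real b * p * (p+q)^(b-1)"
proof (cases b)
  case 0 then show ?thesis by simp
next
  case (Suc c)
  have "(\<Sum>j\<le>Suc c. real (Suc c choose j) * real j * p^j * q^(Suc c-j))
      = (\<Sum>j\<le>c. real (Suc c choose Suc j) * real (Suc j) * p^(Suc j) * q^(c-j))"
    by (subst sum.atMost_Suc_shift) simp
  also have "\<dots> = (\<Sum>j\<le>c. real (Suc c) * p * (real (c choose j) * p^j * q^(c-j)))"
  proof (intro sum.cong refl)
    fix j assume "j \<in> {..c}"
    have "real (Suc c choose Suc j) * real (Suc j) = real (Suc c) * real (c choose j)"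
      using Suc_times_binomial[of j c] by (metis mult.commute of_nat_mult)
    then show "real (Suc c choose Suc j) * real (Suc j) * p^(Suc j) * q^(c-j)
       = real (Suc c) * p * (real (c choose j) * p^j * q^(c-j))" by (simp add: algebra_simps)
  qed
  also have "\<dots> = real (Suc c) * p * (p+q)^c"
    by (simp add: sum_distrib_left[symmetric] binomial_ring atLeast0AtMost)
  finally show ?thesis using Suc by simp
qed

lemma H_bound:
  fixes p :: real assumes "0 < p" "p \<le> 1" "2 \<le> b"
  shows "(\<Sum>j\<in>{2..b}. real (b choose j) * real (j - 1) * p^(j-2) * (1-p)^(b-j)) \<ge> real b / 2"
proof -
  let ?q = "1 - p"
  have s1: "(\<Sum>j\<le>b. real (b choose j) * p^j * ?q^(b-j)) = 1"
    using binomial_ring[of p ?q b] by (simp add: atLeast0AtMost mult.commute mult.left_commute)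
  have s2: "(\<Sum>j\<le>b. real (b choose j) * real j * p^j * ?q^(b-j)) = real b * p"
    using binom_mean[of b p ?q] by simp
  have "(\<Sum>j\<le>b. real (b choose j) * (real j - 1) * p^j * ?q^(b-j)) = real b * p - 1"
    using s1 s2 by (simp add: algebra_simps sum_subtractf)
  moreover have "{..b} = {0,1} \<union> {2..b}" using assms by auto
  then have "(\<Sum>j\<le>b. real (b choose j) * (real j - 1) * p^j * ?q^(b-j)) =
     (\<Sum>j\<in>{0,1}. real (b choose j) * (real j - 1) * p^j * ?q^(b-j)) + (\<Sum>j\<in>{2..b}. real (b choose j) * (real j - 1) * p^j * ?q^(b-j))"
    by (simp only:) (rule sum.union_disjoint, auto)
  ultimately have "(- (?q^b)) + (\<Sum>j\<in>{2..b}. real (b choose j) * (real j - 1) * p^j * ?q^(b-j)) = real b * p - 1"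
    by simp
  then have e: "p^2 * (\<Sum>j\<in>{2..b}. real (b choose j) * real (j - 1) * p^(j-2) * (1-p)^(b-j)) = real b * p - 1 + ?q^b"
  proof -
    have "p^2 * (\<Sum>j\<in>{2..b}. real (b choose j) * real (j - 1) * p^(j-2) * (1-p)^(b-j))
        = (\<Sum>j\<in>{2..b}. real (b choose j) * (real j - 1) * p^j * ?q^(b-j))"
      unfolding sum_distrib_left
    proof (intro sum.cong refl)
      fix j assume "j \<in> {2..b}"
      then have pj: "p^2 * p^(j-2) = p^j" by (metis atLeastAtMost_iff le_add_diff_inverse power_add)
      have "real (j - 1) = real j - 1" using \<open>j \<in> {2..b}\<close> by (simp add: of_nat_diff)
      then show "p^2 * (real (b choose j) * real (j - 1) * p^(j-2) * (1-p)^(b-j))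
         = real (b choose j) * (real j - 1) * p^j * ?q^(b-j)" using pj
        by (metis (no_types, lifting) mult.assoc mult.left_commute)
    qed
    then show ?thesis using \<open>(- (?q^b)) + _ = _\<close> by linarith
  qed
  have "p^2 * (real b / 2) \<le> p^2 * (\<Sum>j\<in>{2..b}. real (b choose j) * real (j - 1) * p^(j-2) * (1-p)^(b-j))"
  proof (subst e)
    have "p^2 * (real b / 2) = real b * p^2 / 2" by simp
    then show "p^2 * (real b / 2) \<le> real b * p - 1 + ?q^b" using G_bound[of p b] assms by linarith
  qed
  moreover have "0 < p^2" using assms by simp
  ultimately show ?thesis by (meson mult_le_cancel_left_pos)
qed


lemma merge_sets_group:
  fixes f :: "nat \<Rightarrow> real"
  assumes "finite P"
  shows "(\<Sum>S\<in>merge_sets P. f (card S)) = (\<Sum>j\<in>{2..card P}. real (card P choose j) * f j)"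
proof -
  let ?A = "\<lambda>j. {S. S \<subseteq> P \<and> card S = j}"
  have U: "merge_sets P = (\<Union>j\<in>{2..card P}. ?A j)"
  proof (rule set_eqI)
    fix S show "S \<in> merge_sets P \<longleftrightarrow> S \<in> (\<Union>j\<in>{2..card P}. ?A j)"
      using assms card_mono[of P S] by (auto simp: merge_sets_def)
  qed
  have fin: "\<And>j. finite (?A j)" using assms by auto
  have "(\<Sum>S\<in>merge_sets P. f (card S)) = (\<Sum>j\<in>{2..card P}. \<Sum>S\<in>?A j. f (card S))"
    unfolding U by (rule sum.UNION_disjoint) (use fin in auto)
  also have "\<dots> = (\<Sum>j\<in>{2..card P}. \<Sum>S\<in>?A j. f j)"
    by (intro sum.cong refl) auto
  also have "\<dots> = (\<Sum>j\<in>{2..card P}. real (card P choose j) * f j)"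
    using n_subsets[OF assms] by simp
  finally show ?thesis .
qed

locale coalL =
  fixes L :: "real measure"
  assumes fmu: "finite_measure_on_unit L" and posL: "emeasure L {0<..1} > 0"
begin

lemma fm: "finite_measure L" and spL: "space L = {0..1}" and setsL: "sets L = sets (restrict_space borel {0..1::real})"
  using fmu by (auto simp: finite_measure_on_unit_def)

lemma measL: "f \<in> borel_measurable borel \<Longrightarrow> (f :: real \<Rightarrow> real) \<in> borel_measurable L"
  using measurable_cong_sets[OF setsL refl] measurable_restrict_space1 by blast

lemma integrableL:
  assumes "f \<in> borel_measurable borel" "\<And>p. p \<in> {0..1} \<Longrightarrow> \<bar>f p\<bar> \<le> B"
  shows "integrable L (f :: real \<Rightarrow> real)"
proof -
  interpret finite_measure L by (rule fm)
  show ?thesis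
  proof (rule integrable_const_bound[where B=B])
    show "AE x in L. norm (f x) \<le> B" by (rule AE_I2) (use assms(2) spL in auto)
    show "f \<in> borel_measurable L" by (rule measL[OF assms(1)])
  qed
qed

definition mass where "mass = measure L {0<..1}"

lemma mass_pos: "mass > 0"
proof -
  interpret finite_measure L by (rule fm)
  show ?thesis using posL by (simp add: mass_def emeasure_eq_measure)
qed

lemma int_poly: "integrable L (\<lambda>p. p ^ a * (1 - p) ^ c)"
  by (rule integrableL[where B=1]) (auto simp: abs_mult power_abs intro!: mult_le_one power_le_one)

lemma rate_nonneg: "0 \<le> coal_rate L b j"
  unfolding coal_rate_def by (rule integral_nonneg_AE, rule AE_I2) (use spL in auto)

lemma total_rate_nonneg: "0 \<le> total_rate L P"
  unfolding total_rate_def by (intro sum_nonneg rate_nonneg)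

lemma D_bound:
  assumes "finite P" "2 \<le> card P"
  shows "(\<Sum>S\<in>merge_sets P. coal_rate L (card P) (card S) * real (card S - 1)) \<ge> real (card P) * mass / 2"
proof -
  let ?b = "card P"
  let ?H = "\<lambda>p. (\<Sum>j\<in>{2..?b}. (real (?b choose j) * real (j - 1)) * (p^(j-2) * (1-p)^(?b-j)))"
  have "(\<Sum>S\<in>merge_sets P. coal_rate L ?b (card S) * real (card S - 1))
      = (\<Sum>j\<in>{2..?b}. real (?b choose j) * (coal_rate L ?b j * real (j - 1)))"
    by (rule merge_sets_group[OF assms(1)])
  also have "\<dots> = (\<Sum>j\<in>{2..?b}. (\<integral>p. (real (?b choose j) * real (j - 1)) * (p^(j-2) * (1-p)^(?b-j)) \<partial>L))"
    unfolding coal_rate_def by (intro sum.cong refl) (simp only: integral_mult_right_zero mult_ac)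
  also have "\<dots> = (\<integral>p. ?H p \<partial>L)"
    by (rule Bochner_Integration.integral_sum[symmetric]) (rule integrable_mult_right, rule int_poly)
  finally have eq: "(\<Sum>S\<in>merge_sets P. coal_rate L ?b (card S) * real (card S - 1)) = (\<integral>p. ?H p \<partial>L)" .
  interpret finite_measure L by (rule fm)
  have mA: "{0<..1::real} \<in> sets L"
    unfolding setsL by (subst sets_restrict_space_iff) auto
  have fin0: "emeasure L {0<..1} < \<top>"
    using emeasure_finite[of "{0<..1::real}"] top.not_eq_extremum by blast
  have fin: "emeasure L {0<..1} < \<infinity>"
    using fin0 by (simp only: infinity_ennreal_def)
  have "(\<integral>p. real ?b / 2 * indicator {0<..1} p \<partial>L) \<le> (\<integral>p. ?H p \<partial>L)"
  proof (rule integral_mono)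
    show "integrable L (\<lambda>p. real ?b / 2 * indicator {0<..1} p)"
      by (rule integrable_mult_right, rule integrable_real_indicator[OF mA fin])
    show "integrable L ?H"
      by (rule Bochner_Integration.integrable_sum, rule integrable_mult_right, rule int_poly)
    fix p assume "p \<in> space L"
    then have p: "0 \<le> p" "p \<le> 1" using spL by auto
    show "real ?b / 2 * indicator {0<..1} p \<le> ?H p"
    proof (cases "p = 0")
      case True
      have "0 \<le> ?H p" using p by (intro sum_nonneg mult_nonneg_nonneg) auto
      then show ?thesis using True by simp
    next
      case False
      have hh: "?H p = (\<Sum>j\<in>{2..?b}. real (?b choose j) * real (j - 1) * p^(j-2) * (1-p)^(?b-j))"
        by (intro sum.cong refl) (simp only: mult.assoc)
      have p0: "0 < p" using p False by linarith
      have "real ?b / 2 \<le> ?H p" unfolding hh by (rule H_bound[OF p0 p(2) assms(2)])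
      moreover have "indicator {0<..1} p = (1::real)" using p False by (simp add: indicator_def)
      ultimately show ?thesis by simp
    qed
  qed
  moreover have "(\<integral>p. real ?b / 2 * indicator {0<..1} p \<partial>L) = real ?b * mass / 2"
  proof -
    have i1: "(\<integral>p. real ?b / 2 * indicator {0<..1} p \<partial>L) = real ?b / 2 * measure L ({0<..1} \<inter> space L)"
      using Bochner_Integration.integral_indicator[where M=L and A="{0<..1::real}"] by (simp only: integral_mult_right_zero)
    have i2: "{0<..1::real} \<inter> space L = {0<..1}" using spL by auto
    show ?thesis unfolding i1 i2 mass_def by simp
  qed
  ultimately show ?thesis using eq by linarith
qed

lemma total_rate_pos:
  assumes "finite P" "2 \<le> card P"
  shows "total_rate L P > 0"
proof -
  have "real (card P) * mass / 2 \<le> (\<Sum>S\<in>merge_sets P. coal_rate L (card P) (card S) * real (card S - 1))"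
    by (rule D_bound[OF assms])
  also have "\<dots> \<le> (\<Sum>S\<in>merge_sets P. coal_rate L (card P) (card S) * real (card P))"
  proof (rule sum_mono)
    fix S assume "S \<in> merge_sets P"
    then have "card S \<le> card P" using assms by (auto simp: merge_sets_def card_mono)
    then have "real (card S - 1) \<le> real (card P)" by simp
    then show "coal_rate L (card P) (card S) * real (card S - 1) \<le> coal_rate L (card P) (card S) * real (card P)"
      using rate_nonneg by (rule mult_left_mono)
  qed
  also have "\<dots> = total_rate L P * real (card P)"
    by (simp add: total_rate_def sum_distrib_right)
  moreover have "0 < real (card P) * mass / 2" using mass_pos assms by simp
  ultimately have "0 < total_rate L P * real (card P)" by linarith
  then show ?thesis using total_rate_nonneg by (simp add: zero_less_mult_iff)
qed

end


lemma key_ineq: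
  fixes b b' c k :: real
  assumes "0 < k" "k \<le> b" "0 \<le> b'" "b' + c \<le> b + 1" "1 \<le> c" "c \<le> b"
  shows "(c - 1) / b^2 \<le> 1 / max b' (k/2) - 1 / b"
proof (cases "b' \<ge> k/2")
  case True
  then have m: "max b' (k/2) = b'" by simp
  have bp: "0 < b'" using True assms by linarith
  have b: "0 < b" using assms by linarith
  have "(c - 1) / b^2 \<le> (b - b') / b^2" using assms by (intro divide_right_mono) auto
  also have "\<dots> \<le> (b - b') / (b * b')"
  proof (rule divide_left_mono)
    show "0 \<le> b - b'" using assms by linarith
    have "b' \<le> b" using assms by linarith
    then show "b * b' \<le> b^2" using b by (simp add: power2_eq_square mult_left_mono)
    show "0 < b^2 * (b * b')" using b bp by simp
  qed
  also have "\<dots> = 1 / b' - 1 / b" using b bp by (simp add: field_simps)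
  finally show ?thesis using m by simp
next
  case False
  then have m: "max b' (k/2) = k/2" by simp
  have b: "0 < b" using assms by linarith
  have "(c - 1) / b^2 \<le> b / b^2" using assms by (intro divide_right_mono) auto
  also have "\<dots> = 1 / b" using b by (simp add: power2_eq_square)
  also have "\<dots> \<le> 2 / b - 1 / b" by simp
  also have "2 / b \<le> 2 / k" using assms by (intro divide_left_mono) auto
  finally show ?thesis using m by simp
qed

context coalL begin

definition hmap :: "partition \<Rightarrow> partition \<Rightarrow> partition" where
  "hmap P S = insert (\<Union>S) (P - S)"

definition wts :: "partition \<Rightarrow> partition \<Rightarrow> real" where
  "wts P S = (if S \<in> merge_sets P then coal_rate L (card P) (card S) / total_rate L P else 0)"

lemma finite_merge_sets: "finite P \<Longrightarrow> finite (merge_sets P)"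
  unfolding merge_sets_def by (rule finite_subset[of _ "Pow P"]) auto

lemma card_hmap:
  assumes "finite P" "S \<in> merge_sets P"
  shows "finite (hmap P S)" "card (hmap P S) + card S \<le> card P + 1" "card S \<le> card P" "2 \<le> card S"
proof -
  have S: "S \<subseteq> P" "2 \<le> card S" using assms by (auto simp: merge_sets_def)
  then have fS: "finite S" using assms finite_subset by blast
  show "finite (hmap P S)" using assms by (simp add: hmap_def)
  have "card (hmap P S) \<le> Suc (card (P - S))"
    unfolding hmap_def using assms by (simp add: card_insert_if)
  moreover have "card (P - S) = card P - card S" using S fS by (simp add: card_Diff_subset)
  moreover have "card S \<le> card P" using S assms by (simp add: card_mono)
  ultimately show "card (hmap P S) + card S \<le> card P + 1" "card S \<le> card P" by auto
  show "2 \<le> card S" by (rule S(2))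
qed

lemma wts_nonneg: "0 \<le> wts P S"
  unfolding wts_def using rate_nonneg total_rate_nonneg by simp

lemma wts_sum:
  assumes "finite P" "2 \<le> card P"
  shows "(\<Sum>S\<in>merge_sets P. wts P S) = 1"
proof -
  have "(\<Sum>S\<in>merge_sets P. wts P S) = (\<Sum>S\<in>merge_sets P. coal_rate L (card P) (card S)) / total_rate L P"
    unfolding sum_divide_distrib by (intro sum.cong refl) (simp add: wts_def)
  also have "\<dots> = 1" using total_rate_pos[OF assms] by (simp add: total_rate_def)
  finally show ?thesis .
qed

lemma wts_prob:
  assumes "finite P" "2 \<le> card P"
  shows "(\<integral>\<^sup>+S. ennreal (wts P S) \<partial>count_space UNIV) = 1"
proof -
  have "(\<integral>\<^sup>+S. ennreal (wts P S) \<partial>count_space UNIV) = (\<Sum>S\<in>merge_sets P. ennreal (wts P S))"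
    by (rule nn_integral_count_space') (auto simp: finite_merge_sets assms wts_def)
  also have "\<dots> = ennreal (\<Sum>S\<in>merge_sets P. wts P S)"
    by (rule sum_ennreal) (simp add: wts_nonneg)
  finally show ?thesis using wts_sum[OF assms] by simp
qed

lemma coal_step_eq:
  assumes "2 \<le> card P"
  shows "coal_step L P = map_pmf (hmap P) (embed_pmf (wts P))"
proof -
  have "wts P = (\<lambda>S. if S \<in> merge_sets P then coal_rate L (card P) (card S) / total_rate L P else 0)"
    by (rule ext) (simp add: wts_def)
  then show ?thesis using assms unfolding coal_step_def hmap_def[abs_def] by simp
qed

lemma pmf_wts:
  assumes "finite P" "2 \<le> card P"
  shows "pmf (embed_pmf (wts P)) S = wts P S" "set_pmf (embed_pmf (wts P)) \<subseteq> merge_sets P"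
proof -
  show "pmf (embed_pmf (wts P)) S = wts P S"
    by (rule pmf_embed_pmf) (auto simp: wts_nonneg wts_prob[OF assms])
  have "set_pmf (embed_pmf (wts P)) = {x. wts P x \<noteq> 0}"
    by (rule set_embed_pmf) (auto simp: wts_nonneg wts_prob[OF assms])
  then show "set_pmf (embed_pmf (wts P)) \<subseteq> merge_sets P"
    by (auto simp: wts_def split: if_splits)
qed

lemma coal_step_support:
  assumes "finite P" "Q \<in> set_pmf (coal_step L P)"
  shows "finite Q \<and> card Q \<le> card P \<and> (2 \<le> card P \<longrightarrow> card Q < card P)"
proof (cases "2 \<le> card P")
  case True
  then obtain S where S: "S \<in> merge_sets P" "Q = hmap P S"
    using assms pmf_wts[OF assms(1) True] by (auto simp: coal_step_eq)
  then show ?thesis using card_hmap[OF assms(1) S(1)] by auto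
next
  case False
  then show ?thesis using assms by (simp add: coal_step_def)
qed

lemma nn_integral_coal_step:
  assumes "finite P" "2 \<le> card P"
  shows "(\<integral>\<^sup>+Q. f Q \<partial>measure_pmf (coal_step L P)) = (\<Sum>S\<in>merge_sets P. f (hmap P S) * ennreal (wts P S))"
proof -
  have "(\<integral>\<^sup>+Q. f Q \<partial>measure_pmf (coal_step L P)) = (\<integral>\<^sup>+S. f (hmap P S) \<partial>measure_pmf (embed_pmf (wts P)))"
    by (simp add: coal_step_eq[OF assms(2)])
  also have "\<dots> = (\<Sum>S\<in>merge_sets P. f (hmap P S) * pmf (embed_pmf (wts P)) S)"
    by (rule nn_integral_measure_pmf_support) (use pmf_wts[OF assms] finite_merge_sets[OF assms(1)] in auto)
  finally show ?thesis by (simp add: pmf_wts[OF assms])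
qed

definition gfun :: "nat \<Rightarrow> partition \<Rightarrow> real" where
  "gfun k P = (if k \<le> card P then 1 / (real (card P) * total_rate L P) else 0)"

definition Vfun :: "nat \<Rightarrow> partition \<Rightarrow> real" where
  "Vfun k P = (2 / mass) * (2 / real k - 1 / max (real (card P)) (real k / 2))"

lemma gfun_nonneg: "0 \<le> gfun k P"
  unfolding gfun_def using total_rate_nonneg by simp

lemma V_nonneg: assumes "0 < k" shows "0 \<le> Vfun k P"
proof -
  have "1 / max (real (card P)) (real k / 2) \<le> 1 / (real k / 2)"
    using assms by (intro divide_left_mono) auto
  then show ?thesis unfolding Vfun_def using mass_pos by (intro mult_nonneg_nonneg) auto
qed

lemma V_mono: assumes "0 < k" "card Q \<le> card P" shows "Vfun k Q \<le> Vfun k P"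
proof -
  have "1 / max (real (card P)) (real k / 2) \<le> 1 / max (real (card Q)) (real k / 2)"
    using assms by (intro divide_left_mono) auto
  then show ?thesis unfolding Vfun_def using mass_pos by (intro mult_left_mono) auto
qed

lemma V_le: assumes "0 < k" shows "Vfun k P \<le> 4 / (mass * real k)"
proof -
  have "0 \<le> 1 / max (real (card P)) (real k / 2)" using assms by auto
  then have "Vfun k P \<le> (2 / mass) * (2 / real k)" unfolding Vfun_def using mass_pos
    by (intro mult_left_mono) auto
  then show ?thesis by simp
qed

lemma key_step:
  assumes "finite P" "2 \<le> k" "2 \<le> card P"
  shows "gfun k P + (\<Sum>S\<in>merge_sets P. Vfun k (hmap P S) * wts P S) \<le> Vfun k P"
proof (cases "k \<le> card P")
  case False
  have "(\<Sum>S\<in>merge_sets P. Vfun k (hmap P S) * wts P S) \<le> (\<Sum>S\<in>merge_sets P. Vfun k P * wts P S)"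
  proof (intro sum_mono mult_right_mono wts_nonneg V_mono)
    fix S assume "S \<in> merge_sets P"
    then show "card (hmap P S) \<le> card P" using card_hmap[OF assms(1)] by force
  qed (use assms in auto)
  also have "\<dots> = Vfun k P" using wts_sum[OF assms(1,3)] by (simp add: sum_distrib_left[symmetric])
  finally show ?thesis using False by (simp add: gfun_def)
next
  case True
  define b where "b = real (card P)"
  define \<gamma> where "\<gamma> = total_rate L P"
  have b: "0 < b" "real k \<le> b" using True assms by (auto simp: b_def)
  have g: "0 < \<gamma>" using total_rate_pos[OF assms(1,3)] by (simp add: \<gamma>_def)
  have VP: "Vfun k P = (2/mass) * (2 / real k - 1 / b)"
    unfolding Vfun_def b_def using True by (simp add: max_def)
  have diff: "(2/mass) * (real (card S - 1) / b^2) \<le> Vfun k P - Vfun k (hmap P S)"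
    if S: "S \<in> merge_sets P" for S
  proof -
    note ch = card_hmap[OF assms(1) S]
    have h1: "real (card (hmap P S)) + real (card S) \<le> b + 1"
      using ch(2) unfolding b_def by (metis of_nat_1 of_nat_add of_nat_le_iff)
    have kin: "(real (card S) - 1) / b^2 \<le> 1 / max (real (card (hmap P S))) (real k / 2) - 1 / b"
      by (rule key_ineq) (use ch b assms h1 in \<open>auto simp: b_def\<close>)
    have "real (card S - 1) = real (card S) - 1" using ch(4) by (simp add: of_nat_diff)
    then have "real (card S - 1) / b^2 \<le> 1 / max (real (card (hmap P S))) (real k / 2) - 1 / b"
      using kin by simp
    then have "(2/mass) * (real (card S - 1) / b^2) \<le> (2/mass) * (1 / max (real (card (hmap P S))) (real k / 2) - 1 / b)"
      using mass_pos by (intro mult_left_mono) auto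
    moreover have "Vfun k P - Vfun k (hmap P S) = (2/mass) * (1 / max (real (card (hmap P S))) (real k / 2) - 1 / b)"
      unfolding VP by (simp add: Vfun_def algebra_simps)
    ultimately show ?thesis by simp
  qed
  have "(\<Sum>S\<in>merge_sets P. wts P S * ((2/mass) * (real (card S - 1) / b^2)))
      = (2/mass) / (b^2 * \<gamma>) * (\<Sum>S\<in>merge_sets P. coal_rate L (card P) (card S) * real (card S - 1))"
    unfolding sum_distrib_left by (intro sum.cong refl) (simp add: wts_def \<gamma>_def field_simps)
  also have "\<dots> \<ge> (2/mass) / (b^2 * \<gamma>) * (b * mass / 2)"
    using D_bound[OF assms(1,3)] b g mass_pos unfolding b_def by (intro mult_left_mono) auto
  finally have lb: "(2/mass) / (b^2 * \<gamma>) * (b * mass / 2) \<le> (\<Sum>S\<in>merge_sets P. wts P S * ((2/mass) * (real (card S - 1) / b^2)))" .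
  have "(2/mass) / (b^2 * \<gamma>) * (b * mass / 2) = gfun k P"
    using b g mass_pos True by (simp add: gfun_def b_def \<gamma>_def power2_eq_square field_simps)
  with lb have "gfun k P \<le> (\<Sum>S\<in>merge_sets P. wts P S * (Vfun k P - Vfun k (hmap P S)))"
    by (smt (verit) diff mult_left_mono sum_mono wts_nonneg)
  also have "\<dots> = Vfun k P - (\<Sum>S\<in>merge_sets P. Vfun k (hmap P S) * wts P S)"
    using wts_sum[OF assms(1,3)]
    by (simp add: right_diff_distrib sum_subtractf sum_distrib_left[symmetric] mult.commute)
  finally show ?thesis by simp
qed

end


context coalL begin

lemma integral_V_step:
  assumes "finite P" "2 \<le> k"
  shows "ennreal (gfun k P) + (\<integral>\<^sup>+Q. ennreal (Vfun k Q) \<partial>measure_pmf (coal_step L P)) \<le> ennreal (Vfun k P)"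
proof (cases "2 \<le> card P")
  case True
  have "(\<integral>\<^sup>+Q. ennreal (Vfun k Q) \<partial>measure_pmf (coal_step L P))
      = (\<Sum>S\<in>merge_sets P. ennreal (Vfun k (hmap P S)) * ennreal (wts P S))"
    by (rule nn_integral_coal_step[OF assms(1) True])
  also have "\<dots> = ennreal (\<Sum>S\<in>merge_sets P. Vfun k (hmap P S) * wts P S)"
    using assms by (subst sum_ennreal[symmetric]) (auto simp: ennreal_mult V_nonneg wts_nonneg intro!: mult_nonneg_nonneg)
  finally have "ennreal (gfun k P) + (\<integral>\<^sup>+Q. ennreal (Vfun k Q) \<partial>measure_pmf (coal_step L P))
      = ennreal (gfun k P + (\<Sum>S\<in>merge_sets P. Vfun k (hmap P S) * wts P S))"
    using assms by (simp add: ennreal_plus gfun_nonneg V_nonneg wts_nonneg sum_nonneg)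
  also have "\<dots> \<le> ennreal (Vfun k P)"
    using key_step[OF assms True] by (rule ennreal_leI)
  finally show ?thesis .
next
  case False
  then show ?thesis using assms by (simp add: coal_step_def gfun_def)
qed

lemma lyap:
  assumes "finite P" "2 \<le> k"
  shows "(\<integral>\<^sup>+xs. (\<Sum>i<m. ennreal (gfun k (xs ! i))) \<partial>measure_pmf (jump_chain L m P)) \<le> ennreal (Vfun k P)"
  using assms(1)
proof (induction m arbitrary: P)
  case 0
  then show ?case by simp
next
  case (Suc m)
  have "(\<integral>\<^sup>+xs. (\<Sum>i<Suc m. ennreal (gfun k (xs ! i))) \<partial>measure_pmf (jump_chain L (Suc m) P))
      = (\<integral>\<^sup>+Q. (\<integral>\<^sup>+xs. ennreal (gfun k P) + (\<Sum>i<m. ennreal (gfun k (xs ! i))) \<partial>measure_pmf (jump_chain L m Q)) \<partial>measure_pmf (coal_step L P))"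
    by (simp add: sum.lessThan_Suc_shift del: sum.lessThan_Suc)
  also have "\<dots> = (\<integral>\<^sup>+Q. ennreal (gfun k P) + (\<integral>\<^sup>+xs. (\<Sum>i<m. ennreal (gfun k (xs ! i))) \<partial>measure_pmf (jump_chain L m Q)) \<partial>measure_pmf (coal_step L P))"
    by (intro nn_integral_cong) (simp add: nn_integral_add measure_pmf.emeasure_space_1)
  also have "\<dots> \<le> (\<integral>\<^sup>+Q. ennreal (gfun k P) + ennreal (Vfun k Q) \<partial>measure_pmf (coal_step L P))"
  proof (intro nn_integral_mono_AE)
    show "AE Q in measure_pmf (coal_step L P). ennreal (gfun k P) + (\<integral>\<^sup>+xs. (\<Sum>i<m. ennreal (gfun k (xs ! i))) \<partial>measure_pmf (jump_chain L m Q)) \<le> ennreal (gfun k P) + ennreal (Vfun k Q)"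
      unfolding AE_measure_pmf_iff
    proof
      fix Q assume "Q \<in> set_pmf (coal_step L P)"
      then have "finite Q" using coal_step_support[OF Suc.prems] by blast
      then show "ennreal (gfun k P) + (\<integral>\<^sup>+xs. (\<Sum>i<m. ennreal (gfun k (xs ! i))) \<partial>measure_pmf (jump_chain L m Q)) \<le> ennreal (gfun k P) + ennreal (Vfun k Q)"
        using Suc.IH by (intro add_left_mono) auto
    qed
  qed
  also have "\<dots> = ennreal (gfun k P) + (\<integral>\<^sup>+Q. ennreal (Vfun k Q) \<partial>measure_pmf (coal_step L P))"
    by (simp add: nn_integral_add measure_pmf.emeasure_space_1)
  also have "\<dots> \<le> ennreal (Vfun k P)"
    by (rule integral_V_step[OF Suc.prems assms(2)])
  finally show ?case .
qed

end


lemma down_closed: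
  assumes "\<And>j j'. 1 \<le> j' \<Longrightarrow> j' \<le> j \<Longrightarrow> j \<le> N \<Longrightarrow> Q j \<Longrightarrow> Q j'"
  shows "\<exists>r\<le>N. {j\<in>{1..<Suc N}. Q j} = {1..r}"
  using assms
proof (induction N)
  case 0
  then show ?case by auto
next
  case (Suc N)
  show ?case
  proof (cases "Q (Suc N)")
    case True
    then have "\<forall>j\<in>{1..Suc N}. Q j" using Suc.prems by auto
    then show ?thesis by (intro exI[of _ "Suc N"]) auto
  next
    case False
    obtain r where r: "r \<le> N" "{j\<in>{1..<Suc N}. Q j} = {1..r}"
      using Suc.IH Suc.prems by (metis le_SucI)
    have "{j\<in>{1..<Suc (Suc N)}. Q j} = {j\<in>{1..<Suc N}. Q j}"
      using False by (auto simp: less_Suc_eq)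
    then show ?thesis using r by (intro exI[of _ r]) auto
  qed
qed

lemma tau_lemma:
  assumes "0 \<le> s" "s < tau L k \<omega>"
  shows "k \<le> num_blocks L \<omega> s"
proof (rule ccontr)
  assume "\<not> k \<le> num_blocks L \<omega> s"
  then have "s \<in> {t. 0 \<le> t \<and> num_blocks L \<omega> t < k}" using assms by auto
  moreover have "bdd_below {t. 0 \<le> t \<and> num_blocks L \<omega> t < k}"
    by (rule bdd_belowI[of _ 0]) auto
  ultimately have "tau L k \<omega> \<le> s" unfolding tau_def by (rule cInf_lower)
  then show False using assms by simp
qed

lemma card_singletons: "card (singletons n) = n" "finite (singletons n)"
  unfolding singletons_def by (auto simp: card_image inj_on_def)

context coalL begin

definition good_chain :: "nat \<Rightarrow> partition \<Rightarrow> partition list \<Rightarrow> bool" where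
  "good_chain m P xs \<longleftrightarrow> length xs = Suc m \<and> xs ! 0 = P \<and> (\<forall>i\<le>m. finite (xs ! i)) \<and>
     (\<forall>i<m. card (xs ! Suc i) \<le> card (xs ! i) \<and> (2 \<le> card (xs ! i) \<longrightarrow> card (xs ! Suc i) < card (xs ! i)))"

lemma chain_support:
  assumes "finite P" "xs \<in> set_pmf (jump_chain L m P)"
  shows "good_chain m P xs"
  using assms
proof (induction m arbitrary: P xs)
  case 0
  then show ?case by (simp add: good_chain_def)
next
  case (Suc m)
  from Suc.prems obtain Q ys where Q: "Q \<in> set_pmf (coal_step L P)" and ys: "ys \<in> set_pmf (jump_chain L m Q)"
    and xs: "xs = P # ys" by auto
  have cQ: "finite Q \<and> card Q \<le> card P \<and> (2 \<le> card P \<longrightarrow> card Q < card P)"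
    using coal_step_support[OF Suc.prems(1) Q] .
  then have g: "good_chain m Q ys" using Suc.IH ys by blast
  have l: "length xs = Suc (Suc m)" using g xs by (simp add: good_chain_def)
  have z: "xs ! 0 = P" using xs by simp
  have f: "\<forall>i\<le>Suc m. finite (xs ! i)"
  proof (intro allI impI)
    fix i assume "i \<le> Suc m"
    then show "finite (xs ! i)" using g xs Suc.prems(1) by (cases i) (auto simp: good_chain_def)
  qed
  have d: "\<forall>i<Suc m. card (xs ! Suc i) \<le> card (xs ! i) \<and> (2 \<le> card (xs ! i) \<longrightarrow> card (xs ! Suc i) < card (xs ! i))"
  proof (intro allI impI)
    fix i assume i: "i < Suc m"
    show "card (xs ! Suc i) \<le> card (xs ! i) \<and> (2 \<le> card (xs ! i) \<longrightarrow> card (xs ! Suc i) < card (xs ! i))"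
      using g xs cQ i by (cases i) (auto simp: good_chain_def)
  qed
  show ?case unfolding good_chain_def using l z f d by blast
qed

lemma good_chain_mono:
  assumes "good_chain m P xs" "i \<le> j" "j \<le> m"
  shows "card (xs ! j) \<le> card (xs ! i)"
  using assms(2,3)
proof (induction j rule: dec_induct)
  case base then show ?case by simp
next
  case (step j)
  then have "card (xs ! Suc j) \<le> card (xs ! j)" using assms(1) by (simp add: good_chain_def)
  then show ?case using step by simp
qed

lemma good_chain_bound:
  assumes "good_chain m P xs" "i \<le> m"
  shows "card (xs ! i) \<le> max 1 (card P - i)"
  using assms(2)
proof (induction i)
  case 0 then show ?case using assms(1) by (simp add: good_chain_def)
next
  case (Suc i)
  then have IH: "card (xs ! i) \<le> max 1 (card P - i)" by simp
  have "card (xs ! Suc i) \<le> card (xs ! i)" "2 \<le> card (xs ! i) \<longrightarrow> card (xs ! Suc i) < card (xs ! i)"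
    using assms(1) Suc.prems by (auto simp: good_chain_def)
  then show ?case using IH by (cases "2 \<le> card (xs ! i)") auto
qed

end


context coalL begin

lemma det_bound:
  assumes xs: "xs \<in> set_pmf (jump_chain L n (singletons n))" and k: "2 \<le> k" "k \<le> n"
    and e: "\<forall>i\<le>n. 0 \<le> e i"
  shows "(\<integral>\<^sup>+ s\<in>{0..<tau L k (xs, e)}. ennreal (1 / real (num_blocks L (xs, e) s)) \<partial>lborel)
     \<le> (\<Sum>i<n. ennreal (gfun k (xs ! i)) * ennreal (e i))"
proof -
  define \<omega> where "\<omega> = (xs, e)"
  define S where "S j = (\<Sum>i<j. hold L \<omega> i)" for j
  define c where "c i = (if k \<le> card (xs ! i) then 1 / real (card (xs ! i)) else 0)" for i
  have g: "good_chain n (singletons n) xs"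
    using chain_support[OF card_singletons(2) xs] .
  have len: "length xs = Suc n" using g by (simp add: good_chain_def)
  have hold_eq: "hold L \<omega> i = e i / total_rate L (xs ! i)" for i
    by (simp add: hold_def \<omega>_def)
  have hold_nn: "0 \<le> hold L \<omega> i" if "i \<le> n" for i
    using e that total_rate_nonneg by (simp add: hold_eq)
  have S_mono: "S j' \<le> S j" if "j' \<le> j" "j \<le> Suc n" for j j'
    unfolding S_def using that hold_nn by (intro sum_mono2) auto
  have S_Suc: "S (Suc i) - S i = hold L \<omega> i" for i by (simp add: S_def)
  have lastc: "card (xs ! n) \<le> 1"
    using good_chain_bound[OF g, of n] by (simp add: card_singletons)
  have c_nn: "0 \<le> c i" for i by (simp add: c_def)
  have pw: "ennreal (1 / real (num_blocks L \<omega> s)) * indicator {0..<tau L k \<omega>} s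
      \<le> (\<Sum>i<n. ennreal (c i) * indicator {S i..<S (Suc i)} s)" for s
  proof (cases "0 \<le> s \<and> s < tau L k \<omega>")
    case False
    then have "indicator {0..<tau L k \<omega>} s = (0::ennreal)" by (auto simp: indicator_def)
    then show ?thesis by simp
  next
    case True
    then have s: "0 \<le> s" "s < tau L k \<omega>" by auto
    define Qp where "Qp j = (2 \<le> card (xs ! (j - 1)) \<and> S j \<le> s)" for j
    have dc: "Qp j'" if "1 \<le> j'" "j' \<le> j" "j \<le> n" "Qp j" for j j'
    proof -
      have "card (xs ! (j - 1)) \<le> card (xs ! (j' - 1))"
        using good_chain_mono[OF g, of "j' - 1" "j - 1"] that by auto
      moreover have "S j' \<le> S j" using S_mono that by auto
      ultimately show ?thesis using that(4) by (auto simp: Qp_def)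
    qed
    obtain r where r: "r \<le> n" "{j\<in>{1..<Suc n}. Qp j} = {1..r}"
      using down_closed[of n Qp] dc by blast
    have cs: "coal_state L \<omega> s = xs ! r"
      unfolding coal_state_def using r len by (simp add: \<omega>_def S_def Qp_def)
    have Nk: "k \<le> card (xs ! r)"
      using tau_lemma[OF s] cs by (simp add: num_blocks_def)
    have rn: "r < n"
    proof (rule ccontr)
      assume "\<not> r < n"
      then have "r = n" using r by simp
      then show False using Nk lastc k by simp
    qed
    have lo: "S r \<le> s"
    proof (cases "r = 0")
      case True then show ?thesis using s by (simp add: S_def)
    next
      case False
      then have "r \<in> {j\<in>{1..<Suc n}. Qp j}" using r by auto
      then show ?thesis by (simp add: Qp_def)
    qed
    have hi: "s < S (Suc r)"
    proof -
      have "Suc r \<notin> {j\<in>{1..<Suc n}. Qp j}" using r by auto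
      then have "\<not> Qp (Suc r)" using rn by auto
      then show ?thesis using Nk k by (simp add: Qp_def)
    qed
    have "ennreal (1 / real (num_blocks L \<omega> s)) * indicator {0..<tau L k \<omega>} s = ennreal (c r) * indicator {S r..<S (Suc r)} s"
      using s lo hi Nk cs by (simp add: num_blocks_def c_def indicator_def)
    also have "\<dots> \<le> (\<Sum>i<n. ennreal (c i) * indicator {S i..<S (Suc i)} s)"
      by (rule member_le_sum) (use rn in auto)
    finally show ?thesis .
  qed
  have "(\<integral>\<^sup>+ s\<in>{0..<tau L k \<omega>}. ennreal (1 / real (num_blocks L \<omega> s)) \<partial>lborel)
      \<le> (\<integral>\<^sup>+ s. (\<Sum>i<n. ennreal (c i) * indicator {S i..<S (Suc i)} s) \<partial>lborel)"
    by (rule nn_integral_mono) (rule pw)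
  also have "\<dots> = (\<Sum>i<n. ennreal (c i) * emeasure lborel {S i..<S (Suc i)})"
    by (subst nn_integral_sum) (auto simp: nn_integral_cmult_indicator)
  also have "\<dots> = (\<Sum>i<n. ennreal (gfun k (xs ! i)) * ennreal (e i))"
  proof (intro sum.cong refl)
    fix i assume i: "i \<in> {..<n}"
    have "S i \<le> S (Suc i)" using S_mono i by auto
    then have "emeasure lborel {S i..<S (Suc i)} = ennreal (hold L \<omega> i)"
      using S_Suc[of i] by simp
    moreover have "c i * hold L \<omega> i = gfun k (xs ! i) * e i"
      by (simp add: c_def gfun_def hold_eq)
    ultimately show "ennreal (c i) * emeasure lborel {S i..<S (Suc i)} = ennreal (gfun k (xs ! i)) * ennreal (e i)"
      using c_nn hold_nn[of i] i e by (simp add: ennreal_mult'[symmetric] ennreal_mult[symmetric] gfun_nonneg)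
  qed
  finally show ?thesis by (simp add: \<omega>_def)
qed

end


lemma exp_mean: "(\<integral>\<^sup>+ x. ennreal x \<partial>density lborel (exponential_density (1::real))) = 1"
proof -
  have "(\<integral>\<^sup>+ x. ennreal x \<partial>density lborel (exponential_density (1::real)))
      = (\<integral>\<^sup>+ x. ennreal (exponential_density 1 x) * ennreal x \<partial>lborel)"
    by (rule nn_integral_density) auto
  also have "\<dots> = (\<integral>\<^sup>+ x. ennreal (erlang_density 0 1 x * x ^ 1) \<partial>lborel)"
  proof (intro nn_integral_cong)
    fix x :: real
    show "ennreal (exponential_density 1 x) * ennreal x = ennreal (erlang_density 0 1 x * x ^ 1)"
    proof (cases "x < 0")
      case True then show ?thesis by (simp add: exponential_density_def)
    next
      case False then show ?thesis
        by (simp add: exponential_density_def ennreal_mult[symmetric])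
    qed
  qed
  also have "\<dots> = 1" using nn_integral_erlang_ith_moment[of 1 0 1] by simp
  finally show ?thesis .
qed

theorem mainTheorem13:
  fixes L :: "real measure"
  assumes "finite_measure_on_unit L"
    and "emeasure L {0<..1} > 0"
  shows "\<exists>C1>0. \<forall>n k. 2 \<le> k \<and> k \<le> n \<longrightarrow>
     (\<integral>\<^sup>+ \<omega>. (\<integral>\<^sup>+ s\<in>{0..<tau L k \<omega>}. ennreal (1 / real (num_blocks L \<omega> s)) \<partial>lborel)
        \<partial>coal_space L n) \<le> ennreal (C1 / real k)"
proof -
  interpret coalL L using assms by unfold_locales
  define C where "C = 4 / mass"
  have Cpos: "C > 0" using mass_pos by (simp add: C_def)
  define E where "E = density lborel (exponential_density (1::real))"
  define M2 where "M2 = PiM (UNIV::nat set) (\<lambda>_. E)"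
  have probE: "prob_space E" unfolding E_def by (rule prob_space_exponential_density) simp
  have setsE: "sets E = sets borel" by (simp add: E_def)
  have probM2: "prob_space M2" unfolding M2_def by (rule prob_space_PiM) (rule probE)
  have sfM2: "sigma_finite_measure M2"
    using probM2 by (simp add: prob_space_imp_sigma_finite)
  have comp_int: "(\<integral>\<^sup>+ e. ennreal (e i) \<partial>M2) = 1" for i
  proof -
    have d: "distr M2 E (\<lambda>\<omega>. \<omega> i) = E"
      unfolding M2_def by (rule distr_PiM_component) (auto simp: probE)
    have "(\<integral>\<^sup>+ e. ennreal (e i) \<partial>M2) = (\<integral>\<^sup>+ x. ennreal x \<partial>distr M2 E (\<lambda>\<omega>. \<omega> i))"
      by (subst nn_integral_distr) (auto simp: M2_def measurable_cong_sets[OF setsE refl])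
    then show ?thesis using d exp_mean by (simp add: E_def)
  qed
  have AEpos: "AE e in M2. \<forall>i\<in>{..n}. 0 \<le> e i" for n :: nat
  proof (rule eventually_ball_finite)
    show "\<forall>i\<in>{..n}. AE e in M2. 0 \<le> e i"
    proof
      fix i :: nat
      have "AE x in E. 0 \<le> x"
        unfolding E_def by (subst AE_density) (auto simp: exponential_density_def)
      then show "AE e in M2. 0 \<le> e i"
        unfolding M2_def using AE_PiM_component[of UNIV "\<lambda>_. E" i "\<lambda>x. 0 \<le> x"] probE by simp
    qed
  qed simp
  show ?thesis
  proof (intro exI[of _ C] conjI allI impI)
    show "C > 0" by (rule Cpos)
    fix n k :: nat assume nk: "2 \<le> k \<and> k \<le> n"
    define J where "J = jump_chain L n (singletons n)"
    have cs: "coal_space L n = measure_pmf J \<Otimes>\<^sub>M M2" by (simp add: coal_space_def J_def M2_def E_def)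
    define g0 where "g0 xs = (if xs \<in> set_pmf J then 0 else (\<top>::ennreal))" for xs
    define h where "h x = (if 0 \<le> x then 0 else (\<top>::ennreal))" for x :: real
    define G where "G xs e = (\<Sum>i<n. ennreal (gfun k (xs ! i)) * ennreal (e i))" for xs and e :: "nat \<Rightarrow> real"
    define F where "F \<omega> = G (fst \<omega>) (snd \<omega>) + g0 (fst \<omega>) + (\<Sum>i\<le>n. h (snd \<omega> i))" for \<omega>
    have hmeas: "h \<in> borel_measurable E"
      unfolding measurable_cong_sets[OF setsE refl] h_def by measurable
    have Emeas: "(\<lambda>x::real. ennreal x) \<in> borel_measurable E"
      unfolding measurable_cong_sets[OF setsE refl] by measurable
    have mfst: "(\<lambda>\<omega>. f (fst \<omega>)) \<in> borel_measurable (measure_pmf J \<Otimes>\<^sub>M M2)" for f :: "partition list \<Rightarrow> ennreal"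
      by (rule measurable_compose[OF measurable_fst]) simp
    have mcomp: "(\<lambda>e. f (e i)) \<in> borel_measurable M2" if "f \<in> borel_measurable E" for f :: "real \<Rightarrow> ennreal" and i
    proof -
      have "(\<lambda>e. e i) \<in> PiM (UNIV::nat set) (\<lambda>_. E) \<rightarrow>\<^sub>M E"
        using measurable_component_singleton[of i UNIV "\<lambda>_. E"] by simp
      then show ?thesis unfolding M2_def by (rule measurable_compose[OF _ that])
    qed
    have msnd: "(\<lambda>\<omega>. f (snd \<omega> i)) \<in> borel_measurable (measure_pmf J \<Otimes>\<^sub>M M2)" if "f \<in> borel_measurable E" for f :: "real \<Rightarrow> ennreal" and i
      by (rule measurable_compose[OF measurable_snd mcomp[OF that]])
    have Fmeas: "F \<in> borel_measurable (measure_pmf J \<Otimes>\<^sub>M M2)"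
      unfolding F_def G_def
      by (intro borel_measurable_add borel_measurable_sum borel_measurable_times_ennreal mfst msnd hmeas Emeas)
    have step1: "(\<integral>\<^sup>+ \<omega>. (\<integral>\<^sup>+ s\<in>{0..<tau L k \<omega>}. ennreal (1 / real (num_blocks L \<omega> s)) \<partial>lborel) \<partial>coal_space L n)
        \<le> (\<integral>\<^sup>+ \<omega>. F \<omega> \<partial>coal_space L n)"
    proof (rule nn_integral_mono)
      fix \<omega> :: "partition list \<times> (nat \<Rightarrow> real)"
      obtain xs e where w: "\<omega> = (xs, e)" by (cases \<omega>)
      show "(\<integral>\<^sup>+ s\<in>{0..<tau L k \<omega>}. ennreal (1 / real (num_blocks L \<omega> s)) \<partial>lborel) \<le> F \<omega>"
      proof (cases "xs \<in> set_pmf J \<and> (\<forall>i\<le>n. 0 \<le> e i)")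
        case True
        then have "(\<integral>\<^sup>+ s\<in>{0..<tau L k \<omega>}. ennreal (1 / real (num_blocks L \<omega> s)) \<partial>lborel) \<le> G xs e"
          unfolding w G_def J_def using det_bound nk by auto
        also have "\<dots> \<le> F \<omega>" unfolding F_def w by simp
        finally show ?thesis .
      next
        case False
        then have "F \<omega> = \<top>"
        proof (cases "xs \<in> set_pmf J")
          case True
          with False obtain i where i: "i \<le> n" "e i < 0" by (auto simp: not_le)
          have "h (e i) = \<top>" using i by (simp add: h_def)
          moreover have "h (e i) \<le> (\<Sum>i\<le>n. h (e i))"
            by (rule member_le_sum) (use i in auto)
          ultimately have "(\<Sum>i\<le>n. h (e i)) = \<top>" by (simp add: top_unique)
          then show ?thesis by (simp add: F_def w)
        next
          case False then show ?thesis by (simp add: F_def w g0_def)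
        qed
        then show ?thesis by simp
      qed
    qed
    also have "\<dots> = (\<integral>\<^sup>+ xs. \<integral>\<^sup>+ e. F (xs, e) \<partial>M2 \<partial>measure_pmf J)"
      unfolding cs by (rule sigma_finite_measure.nn_integral_fst[OF sfM2 Fmeas, symmetric])
    also have "\<dots> = (\<integral>\<^sup>+ xs. (\<Sum>i<n. ennreal (gfun k (xs ! i))) \<partial>measure_pmf J)"
    proof (rule nn_integral_cong_AE)
      show "AE xs in measure_pmf J. (\<integral>\<^sup>+ e. F (xs, e) \<partial>M2) = (\<Sum>i<n. ennreal (gfun k (xs ! i)))"
        unfolding AE_measure_pmf_iff
      proof
        fix xs assume xs: "xs \<in> set_pmf J"
        have "(\<integral>\<^sup>+ e. F (xs, e) \<partial>M2) = (\<integral>\<^sup>+ e. G xs e \<partial>M2)"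
        proof (rule nn_integral_cong_AE)
          show "AE e in M2. F (xs, e) = G xs e"
          proof (rule eventually_mono[OF AEpos])
            fix e :: "nat \<Rightarrow> real" assume A: "\<forall>i\<in>{..n}. 0 \<le> e i"
            have "(\<Sum>i\<le>n. h (e i)) = 0"
            proof (rule sum.neutral)
              show "\<forall>x\<in>{..n}. h (e x) = 0" using A by (simp add: h_def)
            qed
            then show "F (xs, e) = G xs e" by (simp add: F_def g0_def xs)
          qed
        qed
        also have "\<dots> = (\<Sum>i<n. \<integral>\<^sup>+ e. ennreal (gfun k (xs ! i)) * ennreal (e i) \<partial>M2)"
          unfolding G_def by (rule nn_integral_sum) (intro borel_measurable_times_ennreal borel_measurable_const mcomp Emeas)
        also have "\<dots> = (\<Sum>i<n. ennreal (gfun k (xs ! i)) * (\<integral>\<^sup>+ e. ennreal (e i) \<partial>M2))"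
          by (intro sum.cong refl nn_integral_cmult mcomp Emeas)
        also have "\<dots> = (\<Sum>i<n. ennreal (gfun k (xs ! i)))"
          by (simp add: comp_int)
        finally show "(\<integral>\<^sup>+ e. F (xs, e) \<partial>M2) = (\<Sum>i<n. ennreal (gfun k (xs ! i)))" .
      qed
    qed
    also have "\<dots> \<le> ennreal (Vfun k (singletons n))"
      unfolding J_def by (rule lyap[OF card_singletons(2)]) (use nk in simp)
    also have "\<dots> \<le> ennreal (C / real k)"
    proof (rule ennreal_leI)
      have "Vfun k (singletons n) \<le> 4 / (mass * real k)" by (rule V_le) (use nk in simp)
      then show "Vfun k (singletons n) \<le> C / real k" by (simp add: C_def)
    qed
    finally show "(\<integral>\<^sup>+ \<omega>. (\<integral>\<^sup>+ s\<in>{0..<tau L k \<omega>}. ennreal (1 / real (num_blocks L \<omega> s)) \<partial>lborel) \<partial>coal_space L n)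
        \<le> ennreal (C / real k)" .
  qed
qed


end
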